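(* Let $L$ be a nonabelian finite simple group whose order is divisible by a prime $r$, and let $x\in\mathrm{Aut}(L)$, $x\neq 1$. Suppose $x$ leaves invariant a subgroup $H\leq L$ and a normal subgroup $N$ of $H$, thus inducing an automorphism $\overline{x}$ of $\overline{H}=H/N$. Suppose also that $\overline{H}$ contains a simple $\overline{x}$-invariant subgroup $\overline{L}$ on which $\overline{x}$ acts nontrivially and whose order is divisible by $r$. Then $\beta_r(x,L)\leq\beta_r(\overline{x},\overline{L})$.
   Context: For a nonabelian finite simple group $L$ (identified with $\mathrm{Inn}(L)\leq\mathrm{Aut}(L)$), a nontrivial $x\in\mathrm{Aut}(L)$ and a prime $r$ dividing $|L|$, $\beta_r(x,L)$ denotes the smallest number $k$ such that there exist $g_1,\dots,g_k\in L$ for which $\langle x^{g_1},\dots,x^{g_k}\rangle\leq\langle L,x\rangle$ has order divisible by $r$. In $\beta_r(\overline{x},\overline{L})$, $\overline{x}$ is regarded (via its restriction) as an automorphism of $\overline{L}$. *)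

theory Defs
  imports "HOL-Algebra.Algebra" "HOL-Library.Extended_Nat"
begin

definition inner_aut :: "('a, 'b) monoid_scheme \<Rightarrow> 'a \<Rightarrow> ('a \<Rightarrow> 'a)" where
  "inner_aut G g = (\<lambda>a\<in>carrier G. g \<otimes>\<^bsub>G\<^esub> a \<otimes>\<^bsub>G\<^esub> inv\<^bsub>G\<^esub> g)"

definition aut_conj :: "('a, 'b) monoid_scheme \<Rightarrow> ('a \<Rightarrow> 'a) \<Rightarrow> 'a \<Rightarrow> ('a \<Rightarrow> 'a)" where
  "aut_conj G x g =
     inv\<^bsub>AutoGroup G\<^esub> (inner_aut G g) \<otimes>\<^bsub>AutoGroup G\<^esub> x \<otimes>\<^bsub>AutoGroup G\<^esub> inner_aut G g"

text \<open>beta_r(x,G): least k such that some g_1..g_k in G give a subgroup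
  <x^{g_1},...,x^{g_k}> of Aut(G) of order divisible by r (infinity if no such k).\<close>
definition beta :: "nat \<Rightarrow> ('a, 'b) monoid_scheme \<Rightarrow> ('a \<Rightarrow> 'a) \<Rightarrow> enat" where
  "beta r G x = Inf {enat k | k. \<exists>gs. length gs = k \<and> set gs \<subseteq> carrier G \<and>
       r dvd card (generate (AutoGroup G) (aut_conj G x ` set gs))}"

end

theory Submission
  imports Defs
begin


lemma card_hom_img_dvd:
  assumes "group_hom G H h" "subgroup K G" "finite K"
  shows "card (h ` K) dvd card K"
proof -
  interpret group_hom G H h by fact
  let ?G = "G\<lparr>carrier := K\<rparr>" and ?H = "H\<lparr>carrier := h ` K\<rparr>"
  have gG: "group ?G" using assms(2) G.subgroup_imp_group by blast
  have sub: "subgroup (h ` K) H" using subgroup_img_is_subgroup assms(2) by blast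
  have gH: "group ?H" using sub H.subgroup_imp_group by blast
  have K: "K \<subseteq> carrier G" using assms(2) subgroup.subset by blast
  have "h \<in> hom ?G ?H" using K by (auto simp: hom_def subsetD)
  then have gh: "group_hom ?G ?H h" using gG gH by (simp add: group_hom_def group_hom_axioms_def)
  have iso: "?G Mod (kernel ?G ?H h) \<cong> ?H"
    using group_hom.FactGroup_iso[OF gh] by simp
  have c1: "card (rcosets\<^bsub>?G\<^esub> (kernel ?G ?H h)) = card (h ` K)"
    using iso_same_card[OF iso] by (simp add: FactGroup_def)
  have "card (rcosets\<^bsub>?G\<^esub> (kernel ?G ?H h)) * card (kernel ?G ?H h) = order ?G"
    using group.lagrange[OF gG group_hom.subgroup_kernel[OF gh]] .
  then show ?thesis using c1 by (metis dvd_triv_left order_def partial_object.select_convs(1) partial_object.surjective partial_object.update_convs(1))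
qed



lemma autoA_mult:
  assumes "a \<in> auto L" "b \<in> auto L" "c \<in> carrier L"
  shows "(a \<otimes>\<^bsub>AutoGroup L\<^esub> b) c = a (b c)"
  using assms by (simp add: AutoGroup_def BijGroup_def auto_def compose_def)

lemma autoA_one:
  "\<one>\<^bsub>AutoGroup L\<^esub> = (\<lambda>c\<in>carrier L. c)"
  by (simp add: AutoGroup_def BijGroup_def)

lemma auto_funcset: "a \<in> auto L \<Longrightarrow> c \<in> carrier L \<Longrightarrow> a c \<in> carrier L"
  by (auto simp: auto_def hom_def)

lemma autoA_carrier: "carrier (AutoGroup L) = auto L"
  by (simp add: AutoGroup_def)

lemma auto_set_mult:
  assumes "a \<in> auto L" "C \<subseteq> carrier L" "D \<subseteq> carrier L"
  shows "a ` (C <#>\<^bsub>L\<^esub> D) = a ` C <#>\<^bsub>L\<^esub> a ` D"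
proof -
  have h: "\<And>c d. c \<in> carrier L \<Longrightarrow> d \<in> carrier L \<Longrightarrow> a (c \<otimes>\<^bsub>L\<^esub> d) = a c \<otimes>\<^bsub>L\<^esub> a d"
    using assms(1) by (auto simp: auto_def hom_def)
  show ?thesis using assms(2,3) unfolding set_mult_def by (force simp: h subsetD)
qed

lemma (in group) inner_aut_auto:
  assumes "g \<in> carrier G"
  shows "inner_aut G g \<in> auto G"
proof -
  have "inner_aut G g \<in> Bij (carrier G)"
    using conjugation_is_hom assms unfolding hom_def BijGroup_def inner_aut_def by auto
  moreover have "inner_aut G g \<in> hom G G"
  proof -
    have "g \<otimes> (x \<otimes> y) \<otimes> inv g = g \<otimes> x \<otimes> inv g \<otimes> (g \<otimes> y \<otimes> inv g)"
      if "x \<in> carrier G" "y \<in> carrier G" for x y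
      using that assms by (simp add: m_assoc[symmetric]) (simp add: m_assoc)
    then show ?thesis using assms unfolding hom_def inner_aut_def by auto
  qed
  ultimately show ?thesis by (simp add: auto_def)
qed

lemma (in group) autoA_inv:
  assumes "a \<in> auto G"
  shows "inv\<^bsub>AutoGroup G\<^esub> a \<in> auto G"
    and "c \<in> carrier G \<Longrightarrow> a ((inv\<^bsub>AutoGroup G\<^esub> a) c) = c"
    and "c \<in> carrier G \<Longrightarrow> (inv\<^bsub>AutoGroup G\<^esub> a) (a c) = c"
proof -
  interpret A: group "AutoGroup G" by (rule AutoGroup)
  have a: "a \<in> carrier (AutoGroup G)" using assms by (simp add: autoA_carrier)
  show i: "inv\<^bsub>AutoGroup G\<^esub> a \<in> auto G" using A.inv_closed[OF a] by (simp add: autoA_carrier)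
  show "c \<in> carrier G \<Longrightarrow> a ((inv\<^bsub>AutoGroup G\<^esub> a) c) = c"
    using A.r_inv[OF a] autoA_mult[OF assms i] autoA_one[of G] by (metis restrict_apply')
  show "c \<in> carrier G \<Longrightarrow> (inv\<^bsub>AutoGroup G\<^esub> a) (a c) = c"
    using A.l_inv[OF a] autoA_mult[OF i assms] autoA_one[of G] by (metis restrict_apply')
qed



theorem lemma1p4:
  fixes L :: "('a, 'b) monoid_scheme" and x :: "'a \<Rightarrow> 'a" and r :: nat
    and H N :: "'a set" and Lb :: "'a set set"
  assumes "simple_group L" and "finite (carrier L)" and "\<not> comm_group L"
    and "Factorial_Ring.prime r" and "r dvd order L"
    and "x \<in> auto L" and "x \<noteq> (\<lambda>a\<in>carrier L. a)"
    and "subgroup H L" and "x ` H = H"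
    and "N \<lhd> L\<lparr>carrier := H\<rparr>" and "x ` N = N"
    and "subgroup Lb (L\<lparr>carrier := H\<rparr> Mod N)"
    and "simple_group ((L\<lparr>carrier := H\<rparr> Mod N)\<lparr>carrier := Lb\<rparr>)"
    and "(\<lambda>C. x ` C) ` Lb = Lb"
    and "\<exists>C\<in>Lb. x ` C \<noteq> C"
    and "r dvd card Lb"
  shows "beta r L x \<le> beta r ((L\<lparr>carrier := H\<rparr> Mod N)\<lparr>carrier := Lb\<rparr>) (\<lambda>C\<in>Lb. x ` C)"
proof -
  interpret L: group L using assms(1) simple_group.axioms(1) by blast
  let ?HH = "L\<lparr>carrier := H\<rparr>"
  let ?Q = "?HH Mod N"
  let ?Lb = "?Q\<lparr>carrier := Lb\<rparr>"
  let ?A = "AutoGroup L"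
  let ?B = "AutoGroup ?Lb"
  let ?xb = "\<lambda>C\<in>Lb. x ` C"
  define phi where "phi = (\<lambda>a::'a\<Rightarrow>'a. \<lambda>C\<in>Lb. a ` C)"
  define S where "S = {a \<in> auto L. (\<forall>C\<in>Lb. a ` C \<in> Lb) \<and> (\<forall>C\<in>Lb. (inv\<^bsub>?A\<^esub> a) ` C \<in> Lb)}"
  have gHH: "group ?HH" using L.subgroup_imp_group assms(8) by blast
  interpret HH: group ?HH by (rule gHH)
  interpret N: normal N ?HH by (rule assms(10))
  have gQ: "group ?Q" by (rule N.factorgroup_is_group)
  interpret Q: group ?Q by (rule gQ)
  have gLb: "group ?Lb" using assms(13) simple_group.axioms(1) by blast
  interpret A: group ?A by (rule L.AutoGroup)
  interpret B: group ?B by (rule group.AutoGroup[OF gLb])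
  have HL: "H \<subseteq> carrier L" using assms(8) subgroup.subset by blast
  have NH: "N \<subseteq> H" using N.subset by simp
  have Lbform: "\<exists>h\<in>H. C = N #>\<^bsub>L\<^esub> h" if "C \<in> Lb" for C
  proof -
    have "C \<in> carrier ?Q" using that assms(12) subgroup.subset by blast
    then show ?thesis by (auto simp: FactGroup_def RCOSETS_def)
  qed
  have Lbsub: "C \<subseteq> carrier L" if "C \<in> Lb" for C
    using Lbform[OF that] NH HL by (auto simp: r_coset_def intro!: L.m_closed)
  have img_mul: "(a \<otimes>\<^bsub>?A\<^esub> b) ` C = a ` (b ` C)"
    if "a \<in> auto L" "b \<in> auto L" "C \<subseteq> carrier L" for a b C
    using that autoA_mult[OF that(1,2)] by (force simp: subsetD)
  have inv_img1: "a ` ((inv\<^bsub>?A\<^esub> a) ` C) = C" if "a \<in> auto L" "C \<subseteq> carrier L" for a C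
    using that L.autoA_inv(2)[OF that(1)] by (force simp: image_comp subsetD)
  have inv_img2: "(inv\<^bsub>?A\<^esub> a) ` (a ` C) = C" if "a \<in> auto L" "C \<subseteq> carrier L" for a C
    using that L.autoA_inv(3)[OF that(1)] by (force simp: image_comp subsetD)
  have inv_auto: "inv\<^bsub>?A\<^esub> a \<in> auto L" if "a \<in> auto L" for a
    using L.autoA_inv(1)[OF that] .
  have one_img: "\<one>\<^bsub>?A\<^esub> ` C = C" if "C \<subseteq> carrier L" for C
    using that by (auto simp: autoA_one subsetD)
  have Acar: "carrier ?A = auto L" by (simp add: autoA_carrier)
  have subS: "subgroup S ?A"
  proof
    show "S \<subseteq> carrier ?A" by (auto simp: S_def Acar)
  next
    fix a b assume a: "a \<in> S" and b: "b \<in> S"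
    have aa: "a \<in> auto L" and ba: "b \<in> auto L" using a b by (auto simp: S_def)
    have "inv\<^bsub>?A\<^esub> (a \<otimes>\<^bsub>?A\<^esub> b) = inv\<^bsub>?A\<^esub> b \<otimes>\<^bsub>?A\<^esub> inv\<^bsub>?A\<^esub> a"
      using aa ba Acar A.inv_mult_group by auto
    then show "a \<otimes>\<^bsub>?A\<^esub> b \<in> S"
      using a b aa ba Lbsub A.m_closed[of a b] Acar img_mul inv_auto
      by (auto simp: S_def)
  next
    show "\<one>\<^bsub>?A\<^esub> \<in> S" using A.one_closed Acar one_img Lbsub A.inv_one by (auto simp: S_def)
  next
    fix a assume a: "a \<in> S"
    have aa: "a \<in> auto L" using a by (auto simp: S_def)
    have "inv\<^bsub>?A\<^esub> (inv\<^bsub>?A\<^esub> a) = a" using A.inv_inv aa Acar by auto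
    then show "inv\<^bsub>?A\<^esub> a \<in> S" using a inv_auto[OF aa] by (auto simp: S_def)
  qed
  have Lbcar: "carrier ?Lb = Lb" by simp
  have Lbmult: "C \<otimes>\<^bsub>?Lb\<^esub> D = C <#>\<^bsub>L\<^esub> D" for C D by simp
  have Lbclosed: "C <#>\<^bsub>L\<^esub> D \<in> Lb" if "C \<in> Lb" "D \<in> Lb" for C D
    using subgroup.m_closed[OF assms(12) that] by simp
  have phi_auto: "phi a \<in> auto ?Lb" if a: "a \<in> S" for a
  proof -
    have aa: "a \<in> auto L" using a by (auto simp: S_def)
    have hom: "phi a \<in> hom ?Lb ?Lb"
      unfolding hom_def using a Lbclosed auto_set_mult[OF aa] Lbsub
      by (auto simp: phi_def S_def)
    have inj: "inj_on a (carrier L)" using aa by (auto simp: auto_def Bij_def bij_betw_def)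
    have "inj_on (phi a) Lb"
      unfolding phi_def by (rule inj_onI) (use inj Lbsub in \<open>auto simp: inj_on_image_eq_iff\<close>)
    moreover have "phi a ` Lb = Lb"
    proof
      show "phi a ` Lb \<subseteq> Lb" using a by (auto simp: phi_def S_def)
      show "Lb \<subseteq> phi a ` Lb"
      proof
        fix C assume C: "C \<in> Lb"
        have "(inv\<^bsub>?A\<^esub> a) ` C \<in> Lb" using a C by (auto simp: S_def)
        moreover have "C = a ` ((inv\<^bsub>?A\<^esub> a) ` C)" using inv_img1 aa Lbsub C by auto
        ultimately show "C \<in> phi a ` Lb" unfolding phi_def by (auto intro!: image_eqI)
      qed
    qed
    ultimately have "phi a \<in> Bij Lb" by (auto simp: Bij_def bij_betw_def phi_def)
    then show ?thesis using hom by (simp add: auto_def)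
  qed
  have Bcar: "carrier ?B = auto ?Lb" by (simp add: autoA_carrier)
  have Bmult: "f \<otimes>\<^bsub>?B\<^esub> g = compose Lb f g" if "f \<in> auto ?Lb" "g \<in> auto ?Lb" for f g
    using that by (simp add: AutoGroup_def BijGroup_def auto_def)
  have phi_mult: "phi (a \<otimes>\<^bsub>?A\<^esub> b) = phi a \<otimes>\<^bsub>?B\<^esub> phi b" if "a \<in> S" "b \<in> S" for a b
  proof -
    have aa: "a \<in> auto L" "b \<in> auto L" using that by (auto simp: S_def)
    have "phi (a \<otimes>\<^bsub>?A\<^esub> b) = compose Lb (phi a) (phi b)"
    proof
      fix C
      show "phi (a \<otimes>\<^bsub>?A\<^esub> b) C = compose Lb (phi a) (phi b) C"
      proof (cases "C \<in> Lb")
        case True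
        then have "b ` C \<in> Lb" using that by (auto simp: S_def)
        then show ?thesis unfolding phi_def compose_def using True aa img_mul Lbsub by simp
      qed (simp add: phi_def compose_def)
    qed
    then show ?thesis using Bmult phi_auto that by simp
  qed
  have ghom: "group_hom (?A\<lparr>carrier := S\<rparr>) ?B phi"
  proof -
    have "group (?A\<lparr>carrier := S\<rparr>)" using A.subgroup_imp_group[OF subS] .
    moreover have "phi \<in> hom (?A\<lparr>carrier := S\<rparr>) ?B"
      unfolding hom_def using phi_auto phi_mult Bcar by auto
    ultimately show ?thesis using B.is_group by (simp add: group_hom_def group_hom_axioms_def)
  qed
  have invH: "inv\<^bsub>?HH\<^esub> g = inv\<^bsub>L\<^esub> g" if "g \<in> H" for g
    using L.m_inv_consistent[OF assms(8) that] .
  have conj_coset: "inner_aut L g ` (N #>\<^bsub>L\<^esub> h) = N #>\<^bsub>L\<^esub> (g \<otimes>\<^bsub>L\<^esub> h \<otimes>\<^bsub>L\<^esub> inv\<^bsub>L\<^esub> g)"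
    if g: "g \<in> H" and h: "h \<in> H" for g h
  proof -
    have c1: "g \<otimes>\<^bsub>L\<^esub> n \<otimes>\<^bsub>L\<^esub> inv\<^bsub>L\<^esub> g \<in> N" if "n \<in> N" for n
      using N.inv_op_closed2[of g n] g that invH by simp
    have c2: "inv\<^bsub>L\<^esub> g \<otimes>\<^bsub>L\<^esub> n \<otimes>\<^bsub>L\<^esub> g \<in> N" if "n \<in> N" for n
      using N.inv_op_closed1[of g n] g that invH by simp
    have gL: "g \<in> carrier L" "h \<in> carrier L" using g h HL by auto
    have NL: "n \<in> N \<Longrightarrow> n \<in> carrier L" for n using NH HL by auto
    have cc1: "inv\<^bsub>L\<^esub> g \<otimes>\<^bsub>L\<^esub> (g \<otimes>\<^bsub>L\<^esub> z) = z" if "z \<in> carrier L" for z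
      using that gL by (simp add: L.m_assoc[symmetric])
    have cc2: "g \<otimes>\<^bsub>L\<^esub> (inv\<^bsub>L\<^esub> g \<otimes>\<^bsub>L\<^esub> z) = z" if "z \<in> carrier L" for z
      using that gL by (simp add: L.m_assoc[symmetric])
    show ?thesis
    proof
      show "inner_aut L g ` (N #>\<^bsub>L\<^esub> h) \<subseteq> N #>\<^bsub>L\<^esub> (g \<otimes>\<^bsub>L\<^esub> h \<otimes>\<^bsub>L\<^esub> inv\<^bsub>L\<^esub> g)"
      proof
        fix y assume "y \<in> inner_aut L g ` (N #>\<^bsub>L\<^esub> h)"
        then obtain n where n: "n \<in> N" and y: "y = g \<otimes>\<^bsub>L\<^esub> (n \<otimes>\<^bsub>L\<^esub> h) \<otimes>\<^bsub>L\<^esub> inv\<^bsub>L\<^esub> g"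
          using gL NL by (auto simp: inner_aut_def r_coset_def)
        have "y = (g \<otimes>\<^bsub>L\<^esub> n \<otimes>\<^bsub>L\<^esub> inv\<^bsub>L\<^esub> g) \<otimes>\<^bsub>L\<^esub> (g \<otimes>\<^bsub>L\<^esub> h \<otimes>\<^bsub>L\<^esub> inv\<^bsub>L\<^esub> g)"
          using y gL NL[OF n] by (simp add: L.m_assoc cc1)
        then show "y \<in> N #>\<^bsub>L\<^esub> (g \<otimes>\<^bsub>L\<^esub> h \<otimes>\<^bsub>L\<^esub> inv\<^bsub>L\<^esub> g)"
          using c1[OF n] by (auto simp: r_coset_def)
      qed
    next
      show "N #>\<^bsub>L\<^esub> (g \<otimes>\<^bsub>L\<^esub> h \<otimes>\<^bsub>L\<^esub> inv\<^bsub>L\<^esub> g) \<subseteq> inner_aut L g ` (N #>\<^bsub>L\<^esub> h)"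
      proof
        fix y assume "y \<in> N #>\<^bsub>L\<^esub> (g \<otimes>\<^bsub>L\<^esub> h \<otimes>\<^bsub>L\<^esub> inv\<^bsub>L\<^esub> g)"
        then obtain n where n: "n \<in> N" and y: "y = n \<otimes>\<^bsub>L\<^esub> (g \<otimes>\<^bsub>L\<^esub> h \<otimes>\<^bsub>L\<^esub> inv\<^bsub>L\<^esub> g)"
          by (auto simp: r_coset_def)
        let ?m = "inv\<^bsub>L\<^esub> g \<otimes>\<^bsub>L\<^esub> n \<otimes>\<^bsub>L\<^esub> g"
        have m: "?m \<in> N" using c2[OF n] .
        have e: "y = g \<otimes>\<^bsub>L\<^esub> (?m \<otimes>\<^bsub>L\<^esub> h) \<otimes>\<^bsub>L\<^esub> inv\<^bsub>L\<^esub> g"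
          using y gL NL[OF n] by (simp add: L.m_assoc cc1 cc2)
        have "?m \<otimes>\<^bsub>L\<^esub> h \<in> N #>\<^bsub>L\<^esub> h" using m by (auto simp: r_coset_def)
        moreover have "?m \<otimes>\<^bsub>L\<^esub> h \<in> carrier L" using m NL gL by simp
        ultimately show "y \<in> inner_aut L g ` (N #>\<^bsub>L\<^esub> h)"
          using e by (auto simp: inner_aut_def intro!: image_eqI[where x="?m \<otimes>\<^bsub>L\<^esub> h"])
      qed
    qed
  qed
  have rsum: "(N #>\<^bsub>L\<^esub> g) <#>\<^bsub>L\<^esub> (N #>\<^bsub>L\<^esub> h) = N #>\<^bsub>L\<^esub> (g \<otimes>\<^bsub>L\<^esub> h)"
    if "g \<in> H" "h \<in> H" for g h
  proof -
    have "(N #>\<^bsub>?HH\<^esub> g) <#>\<^bsub>?HH\<^esub> (N #>\<^bsub>?HH\<^esub> h) = N #>\<^bsub>?HH\<^esub> (g \<otimes>\<^bsub>?HH\<^esub> h)"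
      by (rule N.rcos_sum) (use that in auto)
    then show ?thesis by (simp only: r_coset_consistent set_mult_consistent) simp
  qed
  have qinv: "inv\<^bsub>?Lb\<^esub> (N #>\<^bsub>L\<^esub> g) = N #>\<^bsub>L\<^esub> inv\<^bsub>L\<^esub> g"
    if g: "g \<in> H" "N #>\<^bsub>L\<^esub> g \<in> Lb" for g
  proof -
    have "inv\<^bsub>?Lb\<^esub> (N #>\<^bsub>L\<^esub> g) = inv\<^bsub>?Q\<^esub> (N #>\<^bsub>L\<^esub> g)"
      using Q.m_inv_consistent[OF assms(12) g(2)] .
    also have "\<dots> = set_inv\<^bsub>?HH\<^esub> (N #>\<^bsub>L\<^esub> g)"
      using N.inv_FactGroup subgroup.subset[OF assms(12)] g(2) by blast
    also have "\<dots> = N #>\<^bsub>L\<^esub> inv\<^bsub>L\<^esub> g"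
    proof -
      have "set_inv\<^bsub>?HH\<^esub> (N #>\<^bsub>?HH\<^esub> g) = N #>\<^bsub>?HH\<^esub> (inv\<^bsub>?HH\<^esub> g)"
        by (rule N.rcos_inv) (use g in auto)
      then show ?thesis by (simp only: r_coset_consistent invH[OF g(1)])
    qed
    finally show ?thesis .
  qed
  have qconj: "inner_aut ?Lb (N #>\<^bsub>L\<^esub> g) D = inner_aut L g ` D"
    if g: "g \<in> H" "N #>\<^bsub>L\<^esub> g \<in> Lb" and D: "D \<in> Lb" for g D
  proof -
    obtain h where h: "h \<in> H" "D = N #>\<^bsub>L\<^esub> h" using Lbform[OF D] by blast
    have ig: "inv\<^bsub>L\<^esub> g \<in> H" using subgroup.m_inv_closed[OF assms(8) g(1)] by simp
    have gh: "g \<otimes>\<^bsub>L\<^esub> h \<in> H" using subgroup.m_closed[OF assms(8) g(1) h(1)] by simp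
    have "inner_aut ?Lb (N #>\<^bsub>L\<^esub> g) D = (N #>\<^bsub>L\<^esub> g) \<otimes>\<^bsub>?Lb\<^esub> D \<otimes>\<^bsub>?Lb\<^esub> inv\<^bsub>?Lb\<^esub> (N #>\<^bsub>L\<^esub> g)"
      unfolding inner_aut_def by (simp only: restrict_apply Lbcar D if_True)
    also have "\<dots> = (N #>\<^bsub>L\<^esub> g) <#>\<^bsub>L\<^esub> D <#>\<^bsub>L\<^esub> (N #>\<^bsub>L\<^esub> inv\<^bsub>L\<^esub> g)"
      unfolding qinv[OF g] Lbmult ..
    also have "\<dots> = N #>\<^bsub>L\<^esub> (g \<otimes>\<^bsub>L\<^esub> h \<otimes>\<^bsub>L\<^esub> inv\<^bsub>L\<^esub> g)"
      unfolding h(2) rsum[OF g(1) h(1)] rsum[OF gh ig] ..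
    also have "\<dots> = inner_aut L g ` D" unfolding h(2) conj_coset[OF g(1) h(1)] ..
    finally show ?thesis .
  qed
  have ext_auto: "f = g" if "f \<in> auto L" "g \<in> auto L" "\<And>c. c \<in> carrier L \<Longrightarrow> f c = g c" for f g
    using that by (auto simp: auto_def Bij_def intro!: extensionalityI[of f "carrier L" g])
  have inner_inv: "inv\<^bsub>?A\<^esub> (inner_aut L g) = inner_aut L (inv\<^bsub>L\<^esub> g)" if g: "g \<in> carrier L" for g
  proof -
    have a1: "inner_aut L g \<in> auto L" using L.inner_aut_auto[OF g] .
    have a2: "inner_aut L (inv\<^bsub>L\<^esub> g) \<in> auto L" using L.inner_aut_auto g by simp
    have "inner_aut L (inv\<^bsub>L\<^esub> g) \<otimes>\<^bsub>?A\<^esub> inner_aut L g = \<one>\<^bsub>?A\<^esub>"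
    proof (rule ext_auto)
      show "inner_aut L (inv\<^bsub>L\<^esub> g) \<otimes>\<^bsub>?A\<^esub> inner_aut L g \<in> auto L" using a1 a2 A.m_closed Acar by auto
      show "\<one>\<^bsub>?A\<^esub> \<in> auto L" using A.one_closed Acar by auto
      fix c assume c: "c \<in> carrier L"
      have "inv\<^bsub>L\<^esub> g \<otimes>\<^bsub>L\<^esub> (g \<otimes>\<^bsub>L\<^esub> c \<otimes>\<^bsub>L\<^esub> inv\<^bsub>L\<^esub> g) \<otimes>\<^bsub>L\<^esub> inv\<^bsub>L\<^esub> (inv\<^bsub>L\<^esub> g) = c"
        using g c by (simp add: L.m_assoc[symmetric]) (simp add: L.m_assoc)
      then show "(inner_aut L (inv\<^bsub>L\<^esub> g) \<otimes>\<^bsub>?A\<^esub> inner_aut L g) c = \<one>\<^bsub>?A\<^esub> c"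
        using autoA_mult[OF a2 a1 c] c g by (simp add: inner_aut_def autoA_one)
    qed
    then show ?thesis using A.inv_equality a1 a2 Acar by auto
  qed
  have inner_S: "inner_aut L g \<in> S \<and> phi (inner_aut L g) = inner_aut ?Lb (N #>\<^bsub>L\<^esub> g)"
    if g: "g \<in> H" "N #>\<^bsub>L\<^esub> g \<in> Lb" for g
  proof -
    have gL: "g \<in> carrier L" using g HL by auto
    have ig: "inv\<^bsub>L\<^esub> g \<in> H" using subgroup.m_inv_closed[OF assms(8) g(1)] by simp
    have ig2: "N #>\<^bsub>L\<^esub> inv\<^bsub>L\<^esub> g \<in> Lb"
      using group.inv_closed[OF gLb, of "N #>\<^bsub>L\<^esub> g"] qinv[OF g] g by simp
    have cl: "inner_aut L k ` D \<in> Lb" if k: "k \<in> H" "N #>\<^bsub>L\<^esub> k \<in> Lb" and D: "D \<in> Lb" for k D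
    proof -
      have "inner_aut ?Lb (N #>\<^bsub>L\<^esub> k) \<in> auto ?Lb" using group.inner_aut_auto[OF gLb] k by simp
      then have "inner_aut ?Lb (N #>\<^bsub>L\<^esub> k) D \<in> Lb" using auto_funcset D by fastforce
      then show ?thesis using qconj[OF k D] by simp
    qed
    have "inner_aut L g \<in> S"
      unfolding S_def using L.inner_aut_auto[OF gL] cl[OF g] cl[OF ig ig2] inner_inv[OF gL] by auto
    moreover have "phi (inner_aut L g) = inner_aut ?Lb (N #>\<^bsub>L\<^esub> g)"
    proof
      fix D show "phi (inner_aut L g) D = inner_aut ?Lb (N #>\<^bsub>L\<^esub> g) D"
        using qconj[OF g, of D] by (cases "D \<in> Lb") (auto simp: phi_def inner_aut_def)
    qed
    ultimately show ?thesis by blast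
  qed
  have xS: "x \<in> S"
  proof -
    have "(inv\<^bsub>?A\<^esub> x) ` C \<in> Lb" if C: "C \<in> Lb" for C
    proof -
      obtain D where D: "D \<in> Lb" "C = x ` D" using C assms(14) by blast
      then show ?thesis using inv_img2[OF assms(6) Lbsub[OF D(1)]] by simp
    qed
    then show ?thesis unfolding S_def using assms(6) assms(14) by blast
  qed
  have phix: "phi x = ?xb" by (simp add: phi_def)
  let ?AS = "?A\<lparr>carrier := S\<rparr>"
  interpret PH: group_hom ?AS ?B phi by (rule ghom)
  have conj_S: "aut_conj L x g \<in> S \<and> phi (aut_conj L x g) = aut_conj ?Lb ?xb (N #>\<^bsub>L\<^esub> g)"
    if g: "g \<in> H" "N #>\<^bsub>L\<^esub> g \<in> Lb" for g
  proof -
    let ?i = "inner_aut L g"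
    have iS: "?i \<in> S" and phii: "phi ?i = inner_aut ?Lb (N #>\<^bsub>L\<^esub> g)" using inner_S[OF g] by auto
    have iiS: "inv\<^bsub>?A\<^esub> ?i \<in> S" using subgroup.m_inv_closed[OF subS iS] .
    have invc: "inv\<^bsub>?AS\<^esub> ?i = inv\<^bsub>?A\<^esub> ?i" using A.m_inv_consistent[OF subS iS] .
    have mS: "inv\<^bsub>?A\<^esub> ?i \<otimes>\<^bsub>?A\<^esub> x \<in> S" using subgroup.m_closed[OF subS iiS xS] .
    have inS: "aut_conj L x g \<in> S" unfolding aut_conj_def using subgroup.m_closed[OF subS mS iS] .
    have "phi (aut_conj L x g) = phi (inv\<^bsub>?A\<^esub> ?i \<otimes>\<^bsub>?A\<^esub> x) \<otimes>\<^bsub>?B\<^esub> phi ?i"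
      unfolding aut_conj_def using PH.hom_mult[of "inv\<^bsub>?A\<^esub> ?i \<otimes>\<^bsub>?A\<^esub> x" ?i] mS iS by simp
    also have "\<dots> = phi (inv\<^bsub>?A\<^esub> ?i) \<otimes>\<^bsub>?B\<^esub> phi x \<otimes>\<^bsub>?B\<^esub> phi ?i"
      using PH.hom_mult[of "inv\<^bsub>?A\<^esub> ?i" x] iiS xS by simp
    also have "phi (inv\<^bsub>?A\<^esub> ?i) = inv\<^bsub>?B\<^esub> (phi ?i)"
      using PH.hom_inv[of ?i] iS invc by simp
    finally have "phi (aut_conj L x g) = aut_conj ?Lb ?xb (N #>\<^bsub>L\<^esub> g)"
      unfolding aut_conj_def phii phix .
    with inS show ?thesis by blast
  qed
  have finA: "finite (auto L)"
  proof (rule finite_subset)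
    show "auto L \<subseteq> carrier L \<rightarrow>\<^sub>E carrier L"
      by (auto simp: auto_def Bij_def bij_betw_def PiE_def)
    show "finite (carrier L \<rightarrow>\<^sub>E carrier L)" using assms(2) by (simp add: finite_PiE)
  qed
  define rep where "rep = (\<lambda>C. SOME g. g \<in> H \<and> C = N #>\<^bsub>L\<^esub> g)"
  have rep: "rep C \<in> H \<and> C = N #>\<^bsub>L\<^esub> rep C" if "C \<in> Lb" for C
  proof -
    have "\<exists>g. g \<in> H \<and> C = N #>\<^bsub>L\<^esub> g" using Lbform[OF that] by blast
    then show ?thesis unfolding rep_def by (rule someI_ex)
  qed
  have repH: "rep C \<in> H" if "C \<in> Lb" for C using rep[OF that] by blast
  have repeq: "N #>\<^bsub>L\<^esub> rep C = C" if "C \<in> Lb" for C using rep[OF that] by blast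
  have key: "enat k \<in> {enat k | k. \<exists>gs. length gs = k \<and> set gs \<subseteq> carrier L \<and>
       r dvd card (generate ?A (aut_conj L x ` set gs))}"
    if gs: "length gs = k" "set gs \<subseteq> carrier ?Lb" "r dvd card (generate ?B (aut_conj ?Lb ?xb ` set gs))" for k gs
  proof -
    let ?gs = "map rep gs"
    let ?X = "aut_conj L x ` set ?gs"
    have gsLb: "C \<in> Lb" if "C \<in> set gs" for C using gs(2) that by auto
    have XS: "?X \<subseteq> S"
    proof
      fix y assume "y \<in> ?X"
      then obtain C where C: "C \<in> set gs" "y = aut_conj L x (rep C)" by auto
      have "N #>\<^bsub>L\<^esub> rep C \<in> Lb" using repeq[OF gsLb[OF C(1)]] gsLb[OF C(1)] by simp
      then show "y \<in> S" using conj_S[OF repH[OF gsLb[OF C(1)]]] C(2) by blast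
    qed
    have phiX: "phi ` ?X = aut_conj ?Lb ?xb ` set gs"
    proof -
      have "phi ` ?X = (\<lambda>C. phi (aut_conj L x (rep C))) ` set gs" by (simp add: image_comp)
      also have "\<dots> = aut_conj ?Lb ?xb ` set gs"
      proof (rule image_cong[OF refl])
        fix C assume C: "C \<in> set gs"
        have r1: "rep C \<in> H" and r2: "N #>\<^bsub>L\<^esub> rep C = C" using repH repeq gsLb[OF C] by auto
        have r3: "N #>\<^bsub>L\<^esub> rep C \<in> Lb" using r2 gsLb[OF C] by simp
        have "phi (aut_conj L x (rep C)) = aut_conj ?Lb ?xb (N #>\<^bsub>L\<^esub> rep C)"
          using conj_S[OF r1 r3] by blast
        then show "phi (aut_conj L x (rep C)) = aut_conj ?Lb ?xb C" unfolding r2 .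
      qed
      finally show ?thesis .
    qed
    have gAS: "group ?AS" using A.subgroup_imp_group[OF subS] .
    have XAS: "?X \<subseteq> carrier ?AS" using XS by simp
    have geq: "generate ?AS ?X = generate ?A ?X" using A.generate_consistent[OF XS subS] .
    have img: "generate ?B (phi ` ?X) = phi ` generate ?AS ?X" using PH.generate_img[OF XAS] .
    have subG: "subgroup (generate ?AS ?X) ?AS" using group.generate_is_subgroup[OF gAS XAS] .
    have finG: "finite (generate ?AS ?X)"
      using subgroup.subset[OF subG] finA by (auto simp: S_def intro: finite_subset)
    have c1: "card (phi ` generate ?AS ?X) dvd card (generate ?AS ?X)"
      using card_hom_img_dvd[OF ghom subG finG] .
    have c2: "card (generate ?B (aut_conj ?Lb ?xb ` set gs)) = card (phi ` generate ?AS ?X)"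
      using img unfolding phiX by simp
    have "r dvd card (generate ?AS ?X)" using dvd_trans[OF gs(3)[unfolded c2] c1] .
    then have d: "r dvd card (generate ?A ?X)" unfolding geq .
    have l: "length ?gs = k" using gs(1) by simp
    have s: "set ?gs \<subseteq> carrier L" using repH gsLb HL by auto
    have "\<exists>gs'. length gs' = k \<and> set gs' \<subseteq> carrier L \<and> r dvd card (generate ?A (aut_conj L x ` set gs'))"
      by (rule exI[of _ ?gs]) (intro conjI l s d)
    then show ?thesis unfolding mem_Collect_eq by (intro exI[of _ k] conjI refl)
  qed
  show ?thesis
    unfolding beta_def
  proof (rule Inf_superset_mono)
    show "{enat k | k. \<exists>gs. length gs = k \<and> set gs \<subseteq> carrier ?Lb \<and>
       r dvd card (generate ?B (aut_conj ?Lb ?xb ` set gs))} \<subseteq>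
      {enat k | k. \<exists>gs. length gs = k \<and> set gs \<subseteq> carrier L \<and>
       r dvd card (generate ?A (aut_conj L x ` set gs))}"
    proof
      fix z assume "z \<in> {enat k | k. \<exists>gs. length gs = k \<and> set gs \<subseteq> carrier ?Lb \<and>
         r dvd card (generate ?B (aut_conj ?Lb ?xb ` set gs))}"
      then obtain k gs where z: "z = enat k" and g1: "length gs = k" and g2: "set gs \<subseteq> carrier ?Lb"
         and g3: "r dvd card (generate ?B (aut_conj ?Lb ?xb ` set gs))" by blast
      show "z \<in> {enat k | k. \<exists>gs. length gs = k \<and> set gs \<subseteq> carrier L \<and>
         r dvd card (generate ?A (aut_conj L x ` set gs))}" unfolding z by (rule key[OF g1 g2 g3])
    qed
  qed
qed

end
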